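(* Let $\phi=\tilde p/p$ be a degree $(n,1)$ rational inner function as in the context, $\alpha\in\mathbb{T}$ and $\gamma\in\mathbb{T}$. Then $\{\gamma\}\times\mathbb{T}\subseteq\mathcal{C}_\alpha$ if and only if $\gamma=\tau_k$ for some $k$ and $\phi^*(\tau_k,\lambda_k)=\alpha$.
   Context: $\mathbb{D}$ is the open unit disk, $\mathbb{T}$ the unit circle. Fix $n\ge1$. Let $p\in\mathbb{C}[z_1,z_2]$ have no zeros on $\mathbb{D}^2$, degree at most $n$ in $z_1$ and at most $1$ in $z_2$, and let $\tilde p(z)=z_1^nz_2\overline{p(1/\bar z_1,1/\bar z_2)}$; assume $\tilde p$ has degree exactly $(n,1)$ and $p,\tilde p$ have no common factor, so $\phi=\tilde p/p$ is a degree $(n,1)$ rational inner function. The zeros of $p$ on $\mathbb{T}^2$ are finitely many points $(\tau_1,\lambda_1),\dots,(\tau_m,\lambda_m)$; the non-tangential limit $\phi^*$ exists and is unimodular at every point of $\mathbb{T}^2$. $\mathcal{C}_\alpha=\{\zeta\in\mathbb{T}^2:\tilde p(\zeta)=\alpha p(\zeta)\}$. *)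

theory Defs
  imports "HOL-Analysis.Analysis" "HOL-Computational_Algebra.Polynomial"
begin

text \<open>Polynomials in C[z1,z2] are represented as elements of (C[z1])[z2], i.e. the type
  complex poly poly: the outer variable is z2, the coefficients are polynomials in z1.\<close>

definition ev2 :: "complex poly poly \<Rightarrow> complex \<Rightarrow> complex \<Rightarrow> complex" where
  "ev2 P z1 z2 = poly (map_poly (\<lambda>q. poly q z1) P) z2"

definition bideg_le :: "nat \<Rightarrow> complex poly poly \<Rightarrow> bool" where
  "bideg_le n P \<longleftrightarrow> degree P \<le> 1 \<and> (\<forall>i. degree (coeff P i) \<le> n)"

definition bideg_eq :: "nat \<Rightarrow> complex poly poly \<Rightarrow> bool" where
  "bideg_eq n P \<longleftrightarrow> degree P = 1 \<and> (\<forall>i. degree (coeff P i) \<le> n)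
      \<and> (\<exists>i. degree (coeff P i) = n)"

text \<open>The reflection tilde p (z) = z1^n z2 conj(p(1/conj z1, 1/conj z2)), written out on
  coefficients: the coefficient of z1^j z2^k is conj of the coefficient of z1^(n-j) z2^(1-k).\<close>
definition refl_poly :: "nat \<Rightarrow> complex poly poly \<Rightarrow> complex poly poly" where
  "refl_poly n P = (\<Sum>k\<le>1. \<Sum>j\<le>n.
      monom (monom (cnj (coeff (coeff P (1 - k)) (n - j))) j) k)"

definition torus2 :: "(complex \<times> complex) set" where
  "torus2 = {z. cmod (fst z) = 1 \<and> cmod (snd z) = 1}"

definition bidisk :: "(complex \<times> complex) set" where
  "bidisk = {z. cmod (fst z) < 1 \<and> cmod (snd z) < 1}"

definition nt_region :: "real \<Rightarrow> complex \<times> complex \<Rightarrow> (complex \<times> complex) set" where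
  "nt_region c \<zeta> = {z \<in> bidisk. norm (z - \<zeta>) < c * (1 - max (cmod (fst z)) (cmod (snd z)))}"

definition nt_tendsto :: "(complex \<times> complex \<Rightarrow> complex) \<Rightarrow> complex \<times> complex \<Rightarrow> complex \<Rightarrow> bool" where
  "nt_tendsto f \<zeta> L \<longleftrightarrow> (\<forall>c>0. (f \<longlongrightarrow> L) (at \<zeta> within nt_region c \<zeta>))"

definition nt_limit :: "(complex \<times> complex \<Rightarrow> complex) \<Rightarrow> complex \<times> complex \<Rightarrow> complex" where
  "nt_limit f \<zeta> = (THE L. nt_tendsto f \<zeta> L)"

definition rif :: "nat \<Rightarrow> complex poly poly \<Rightarrow> complex \<times> complex \<Rightarrow> complex" where
  "rif n P z = ev2 (refl_poly n P) (fst z) (snd z) / ev2 P (fst z) (snd z)"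

definition clevel :: "nat \<Rightarrow> complex poly poly \<Rightarrow> complex \<Rightarrow> (complex \<times> complex) set" where
  "clevel n P \<alpha> = {\<zeta> \<in> torus2. ev2 (refl_poly n P) (fst \<zeta>) (snd \<zeta>) = \<alpha> * ev2 P (fst \<zeta>) (snd \<zeta>)}"

end

theory Submission
  imports Defs
begin


lemma deg1_eq: fixes Q :: "'a::zero poly" assumes "degree Q \<le> 1"
  shows "Q = [:coeff Q 0, coeff Q 1:]"
proof (rule poly_eqI)
  fix i show "coeff Q i = coeff [:coeff Q 0, coeff Q 1:] i"
    using assms by (cases i; cases "i - 1") (auto simp: coeff_pCons coeff_eq_0)
qed

lemma ev2_lin: assumes "degree Q \<le> 1"
  shows "ev2 Q z1 z2 = poly (coeff Q 0) z1 + poly (coeff Q 1) z1 * z2"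
proof -
  have "ev2 Q z1 z2 = ev2 [:coeff Q 0, coeff Q 1:] z1 z2" using deg1_eq[OF assms] by simp
  also have "\<dots> = poly (coeff Q 0) z1 + poly (coeff Q 1) z1 * z2"
    unfolding ev2_def by (simp add: map_poly_pCons)
  finally show ?thesis .
qed

lemma refl_coeff0:
  "coeff (refl_poly n P) 0 = (\<Sum>j\<le>n. monom (cnj (coeff (coeff P 1) (n - j))) j)"
  unfolding refl_poly_def by (simp add: coeff_sum coeff_monom atMost_Suc)

lemma refl_coeff1:
  "coeff (refl_poly n P) 1 = (\<Sum>j\<le>n. monom (cnj (coeff (coeff P 0) (n - j))) j)"
  unfolding refl_poly_def by (simp add: coeff_sum coeff_monom atMost_Suc)

lemma refl_eval:
  fixes q :: "complex poly" assumes "degree q \<le> n" "cmod z = 1"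
  shows "poly (\<Sum>j\<le>n. monom (cnj (coeff q (n - j))) j) z = z ^ n * cnj (poly q z)"
proof -
  have zc: "z * cnj z = 1" using assms(2) by (simp add: complex_norm_square[symmetric])
  have pw: "z ^ n * cnj z ^ (n - j) = z ^ j" if "j \<le> n" for j
  proof -
    have "z ^ n = z ^ j * z ^ (n - j)" using that by (simp add: power_add[symmetric])
    then have "z ^ n * cnj z ^ (n - j) = z ^ j * (z * cnj z) ^ (n - j)"
      by (simp add: power_mult_distrib)
    then show ?thesis using zc by simp
  qed
  have "poly (\<Sum>j\<le>n. monom (cnj (coeff q (n - j))) j) z = (\<Sum>j\<le>n. cnj (coeff q (n - j)) * z ^ j)"
    by (simp add: poly_sum poly_monom)
  also have "\<dots> = (\<Sum>j\<le>n. z ^ n * cnj (coeff q (n - j) * z ^ (n - j)))"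
  proof (rule sum.cong[OF refl])
    fix j assume "j \<in> {..n}"
    then have "z ^ n * cnj z ^ (n - j) = z ^ j" using pw by simp
    then show "cnj (coeff q (n - j)) * z ^ j = z ^ n * cnj (coeff q (n - j) * z ^ (n - j))"
      by (metis complex_cnj_mult complex_cnj_power mult.left_commute)
  qed
  also have "\<dots> = z ^ n * cnj (\<Sum>j\<le>n. coeff q (n - j) * z ^ (n - j))"
    by (simp add: sum_distrib_left)
  also have "(\<Sum>j\<le>n. coeff q (n - j) * z ^ (n - j)) = (\<Sum>j\<le>n. coeff q j * z ^ j)"
  proof -
    have h: "(\<Sum>j\<in>{0..n}. coeff q j * z ^ j) = (\<Sum>j\<in>{0..n}. coeff q (n + 0 - j) * z ^ (n + 0 - j))"
      by (rule sum.atLeastAtMost_rev)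
    show ?thesis using h[symmetric] by (simp only: atLeast0AtMost add_0_right)
  qed
  also have "\<dots> = poly (\<Sum>i\<le>n. monom (coeff q i) i) z"
    by (simp add: poly_sum poly_monom)
  also have "\<dots> = poly q z"
    by (simp only: poly_as_sum_of_monoms'[OF assms(1)])
  finally show ?thesis .
qed

lemma dvd_lin:
  fixes Q :: "complex poly poly"
  assumes "degree Q \<le> 1" "poly (coeff Q 0) g = 0" "poly (coeff Q 1) g = 0"
  shows "[:[:-g,1:]:] dvd Q"
  unfolding const_poly_dvd_iff
proof
  fix i show "[:-g,1:] dvd coeff Q i"
  proof (cases "i \<le> 1")
    case True then have "i = 0 \<or> i = 1" by auto
    then show ?thesis using assms(2,3) poly_eq_0_iff_dvd by auto
  next
    case False then show ?thesis using assms(1) by (simp add: coeff_eq_0)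
  qed
qed

lemma not_unit_lin: "\<not> is_unit [:[:-(g::complex),1:]:]"
proof
  assume "is_unit [:[:-g,1:]:]"
  then have "is_unit [:-g,1:]" using is_unit_const_poly_iff by blast
  then have "degree [:-g,1:] = 0" using is_unit_iff_degree[of "[:-g,1:]"] by simp
  then show False by simp
qed

lemma poly_split: fixes A :: "complex poly" shows "poly A z = (z - g) * poly (synthetic_div A g) z + poly A g"
proof -
  have "poly A z = poly ([:-g, 1:] * synthetic_div A g + [:poly A g:]) z"
    by (simp only: synthetic_div_correct')
  then show ?thesis by (simp add: algebra_simps)
qed

lemma path_lim:
  fixes Q :: "complex poly poly" and g m :: complex and l :: real
  assumes "degree Q \<le> 1" "poly (coeff Q 0) g + poly (coeff Q 1) g * m = 0"
  shows "((\<lambda>t::real. ev2 Q (g * of_real (1 - t)) (m * of_real (1 - l * t)) / of_real t) \<longlongrightarrow>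
     -(g * poly (synthetic_div (coeff Q 0) g) g + g * m * poly (synthetic_div (coeff Q 1) g) g
       + of_real l * m * poly (coeff Q 1) g)) (at_right 0)"
proof -
  define SA where "SA = synthetic_div (coeff Q 0) g"
  define SB where "SB = synthetic_div (coeff Q 1) g"
  define a where "a = poly (coeff Q 0) g"
  define b where "b = poly (coeff Q 1) g"
  define f where "f t = -(g * poly SA (g * of_real (1 - t)) + g * m * poly SB (g * of_real (1 - t))
       + of_real l * m * b) + g * of_real l * m * of_real t * poly SB (g * of_real (1 - t))" for t :: real
  have eq: "ev2 Q (g * of_real (1 - t)) (m * of_real (1 - l * t)) = of_real t * f t" for t
  proof -
    have "ev2 Q (g * of_real (1 - t)) (m * of_real (1 - l * t)) =
       poly (coeff Q 0) (g * of_real (1 - t)) + poly (coeff Q 1) (g * of_real (1 - t)) * (m * of_real (1 - l * t))"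
      by (rule ev2_lin[OF assms(1)])
    also have "\<dots> = ((g * of_real (1 - t) - g) * poly SA (g * of_real (1 - t)) + a)
       + ((g * of_real (1 - t) - g) * poly SB (g * of_real (1 - t)) + b) * (m * of_real (1 - l * t))"
      unfolding SA_def SB_def a_def b_def by (simp only: poly_split[symmetric])
    also have "\<dots> = (a + b * m) + of_real t * f t"
      unfolding f_def by (simp add: algebra_simps)
    finally show ?thesis using assms(2) a_def b_def by simp
  qed
  have c: "(f \<longlongrightarrow> f 0) (at 0)"
    unfolding f_def by (intro tendsto_intros)
  have c2: "(f \<longlongrightarrow> f 0) (at_right 0)"
    by (rule tendsto_mono[OF at_le[OF subset_UNIV] c])
  have ev: "\<forall>\<^sub>F t in at_right (0::real). f t = ev2 Q (g * of_real (1 - t)) (m * of_real (1 - l * t)) / of_real t"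
    using eventually_at_right_less[of 0] by eventually_elim (subst eq, simp)
  have "((\<lambda>t::real. ev2 Q (g * of_real (1 - t)) (m * of_real (1 - l * t)) / of_real t) \<longlongrightarrow> f 0) (at_right 0)"
    using tendsto_cong[OF ev] c2 by simp
  moreover have "f 0 = -(g * poly SA g + g * m * poly SB g + of_real l * m * b)"
    unfolding f_def by simp
  ultimately show ?thesis by (simp add: SA_def SB_def b_def)
qed

lemma cmod_1m[simp]: "cmod (1 - complex_of_real t) = \<bar>1 - t\<bar>"
  by (metis norm_of_real of_real_1 of_real_diff)

lemma path_in_region:
  fixes g m :: complex and l t :: real
  assumes g1: "cmod g = 1" and m1: "cmod m = 1" and l: "1 \<le> l" "l \<le> 3" and t: "0 < t" "t < 1/4"
  shows "(g * of_real (1 - t), m * of_real (1 - l * t)) \<in> nt_region 5 (g, m)"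
    and "(g * of_real (1 - t), m * of_real (1 - l * t)) \<noteq> (g, m)"
proof -
  have lt: "l * t \<le> 3 * t" using l t by (intro mult_right_mono) auto
  have lt1: "t \<le> l * t" using l t by (simp add: mult_le_cancel_right1)
  have n1: "cmod (g * of_real (1 - t)) = 1 - t" using g1 t by (simp add: norm_mult)
  have n2: "cmod (m * of_real (1 - l * t)) = 1 - l * t"
  proof -
    have "cmod (m * of_real (1 - l * t)) = cmod m * \<bar>1 - l * t\<bar>" by (simp only: norm_mult norm_of_real)
    then show ?thesis using m1 t lt by simp
  qed
  have d1: "cmod (g * of_real (1 - t) - g) = t"
  proof -
    have "g * of_real (1 - t) - g = g * of_real (- t)" by (simp add: algebra_simps)
    then show ?thesis using g1 t by (simp add: norm_mult)
  qed
  have d2: "cmod (m * of_real (1 - l * t) - m) = l * t"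
  proof -
    have "m * of_real (1 - l * t) - m = m * of_real (- (l * t))" by (simp add: algebra_simps)
    then show ?thesis using m1 t lt1 by (simp add: norm_mult)
  qed
  define z where "z = (g * of_real (1 - t), m * of_real (1 - l * t))"
  have f1: "cmod (fst z) = 1 - t" and f2: "cmod (snd z) = 1 - l * t" using n1 n2 by (simp_all add: z_def)
  have mx: "max (cmod (fst z)) (cmod (snd z)) = 1 - t" unfolding f1 f2 using lt1 by (simp add: max_def)
  have "norm (z - (g, m)) \<le> cmod (fst z - g) + cmod (snd z - m)"
    unfolding z_def using norm_Pair_le by simp
  also have "\<dots> = t + l * t" using d1 d2 by (simp add: z_def)
  also have "\<dots> < 5 * t" using lt t by linarith
  finally have nb: "norm (z - (g, m)) < 5 * (1 - max (cmod (fst z)) (cmod (snd z)))" unfolding mx by simp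
  have bd: "z \<in> bidisk" unfolding bidisk_def using f1 f2 t lt1 by simp
  show "(g * of_real (1 - t), m * of_real (1 - l * t)) \<in> nt_region 5 (g, m)"
    using nb bd unfolding nt_region_def z_def[symmetric] by blast
  show "(g * of_real (1 - t), m * of_real (1 - l * t)) \<noteq> (g, m)"
  proof
    assume "(g * of_real (1 - t), m * of_real (1 - l * t)) = (g, m)"
    then have "g * of_real (1 - t) - g = 0" by simp
    then show False using d1 t by simp
  qed
qed

lemma key:
  fixes P R :: "complex poly poly" and g m c L :: complex
  assumes dP: "degree P \<le> 1" and dR: "degree R \<le> 1" and g1: "cmod g = 1" and m1: "cmod m = 1"
    and b0: "poly (coeff P 1) g \<noteq> 0" and root: "poly (coeff P 0) g + poly (coeff P 1) g * m = 0"
    and hc: "\<forall>z. ev2 R g z = c * ev2 P g z"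
    and lim: "((\<lambda>z. ev2 R (fst z) (snd z) / ev2 P (fst z) (snd z)) \<longlongrightarrow> L) (at (g,m) within nt_region 5 (g,m))"
  shows "L = c"
proof -
  define a where "a = poly (coeff P 0) g"
  define b where "b = poly (coeff P 1) g"
  have rc0: "poly (coeff R 0) g = c * a"
    using hc[rule_format, of 0] ev2_lin[OF dR, of g 0] ev2_lin[OF dP, of g 0] a_def by simp
  have rc1: "poly (coeff R 1) g = c * b"
    using hc[rule_format, of 1] ev2_lin[OF dR, of g 1] ev2_lin[OF dP, of g 1] rc0 a_def b_def
    by (simp add: algebra_simps)
  have rootR: "poly (coeff R 0) g + poly (coeff R 1) g * m = 0"
  proof -
    have "poly (coeff R 0) g + poly (coeff R 1) g * m = c * (a + b * m)"
      unfolding rc0 rc1 by (simp add: algebra_simps)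
    then show ?thesis using root a_def b_def by simp
  qed
  define KP where "KP = g * poly (synthetic_div (coeff P 0) g) g + g * m * poly (synthetic_div (coeff P 1) g) g"
  define KR where "KR = g * poly (synthetic_div (coeff R 0) g) g + g * m * poly (synthetic_div (coeff R 1) g) g"
  have step: "L * (KP + of_real l * m * b) = KR + of_real l * m * (c * b)"
    if l: "1 \<le> l" "l \<le> 3" and den: "KP + of_real l * m * b \<noteq> 0" for l :: real
  proof -
    define z where "z t = (g * of_real (1 - t), m * of_real (1 - l * t))" for t :: real
    have zt: "(z \<longlongrightarrow> (g, m)) (at_right 0)"
    proof -
      have "(z \<longlongrightarrow> (g * of_real (1 - 0), m * of_real (1 - l * 0))) (at_right 0)"
        unfolding z_def by (intro tendsto_intros)
      then show ?thesis by simp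
    qed
    have evS: "\<forall>\<^sub>F t in at_right (0::real). z t \<in> nt_region 5 (g, m) \<and> z t \<noteq> (g, m)"
    proof -
      have "\<forall>\<^sub>F t in at_right (0::real). t \<in> {0<..<1/4}" by (rule eventually_at_right_real) simp
      then show ?thesis by eventually_elim (use path_in_region[OF g1 m1 l] in \<open>auto simp: z_def\<close>)
    qed
    have filt: "filterlim z (at (g, m) within nt_region 5 (g, m)) (at_right 0)"
      unfolding filterlim_at using zt evS by auto
    have l1: "((\<lambda>t. ev2 R (fst (z t)) (snd (z t)) / ev2 P (fst (z t)) (snd (z t))) \<longlongrightarrow> L) (at_right 0)"
      using filterlim_compose[OF lim filt] by (simp add: o_def)
    note lP = path_lim[OF dP root, of l]
    note lR = path_lim[OF dR rootR, of l]
    define F where "F t = ev2 R (g * of_real (1 - t)) (m * of_real (1 - l * t)) / ev2 P (g * of_real (1 - t)) (m * of_real (1 - l * t))" for t :: real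
    have l1': "(F \<longlongrightarrow> L) (at_right 0)"
      using l1 unfolding F_def z_def fst_conv snd_conv .
    have dn: "-(g * poly (synthetic_div (coeff P 0) g) g + g * m * poly (synthetic_div (coeff P 1) g) g
       + of_real l * m * poly (coeff P 1) g) \<noteq> 0"
      by (subst neg_equal_0_iff_equal) (use den KP_def b_def in simp)
    note l2 = tendsto_divide[OF lR lP dn]
    have ev: "\<forall>\<^sub>F t in at_right (0::real). (ev2 R (g * of_real (1 - t)) (m * of_real (1 - l * t)) / of_real t) / (ev2 P (g * of_real (1 - t)) (m * of_real (1 - l * t)) / of_real t)
        = F t"
      using eventually_at_right_less[of 0] by eventually_elim (simp add: F_def)
    note l3 = tendsto_cong[OF ev, THEN iffD1, OF l2]
    have vv: "-(g * poly (synthetic_div (coeff R 0) g) g + g * m * poly (synthetic_div (coeff R 1) g) g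
       + of_real l * m * poly (coeff R 1) g) / -(g * poly (synthetic_div (coeff P 0) g) g + g * m * poly (synthetic_div (coeff P 1) g) g
       + of_real l * m * poly (coeff P 1) g) = (-(KR + of_real l * m * (c * b))) / (-(KP + of_real l * m * b))"
      unfolding KR_def KP_def rc1 b_def by (simp add: algebra_simps)
    have "L = (-(KR + of_real l * m * (c * b))) / (-(KP + of_real l * m * b))"
      using tendsto_unique[OF trivial_limit_at_right_real l1' l3] vv by simp
    then have "L = (KR + of_real l * m * (c * b)) / (KP + of_real l * m * b)"
      by (simp only: minus_divide_divide)
    then show ?thesis using den nonzero_eq_divide_eq by blast
  qed
  have mb: "m * b \<noteq> 0" using m1 b0 b_def by auto
  obtain l1 l2 :: real where ls: "l1 \<noteq> l2" "1 \<le> l1" "l1 \<le> 3" "1 \<le> l2" "l2 \<le> 3"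
     "KP + of_real l1 * m * b \<noteq> 0" "KP + of_real l2 * m * b \<noteq> 0"
  proof (cases "KP + of_real 1 * m * b = 0")
    case True
    then have kp: "KP = - (m * b)" by (simp add: eq_neg_iff_add_eq_0)
    have q2: "KP + of_real 2 * m * b = m * b" and q3: "KP + of_real 3 * m * b = 2 * (m * b)"
      using kp by (simp_all add: algebra_simps)
    have "KP + of_real 2 * m * b \<noteq> 0" unfolding q2 using mb .
    moreover have "KP + of_real 3 * m * b \<noteq> 0" unfolding q3 using mb by simp
    ultimately show ?thesis using that[of 2 3] by simp
  next
    case False
    have "KP + of_real 2 * m * b \<noteq> 0 \<or> KP + of_real 3 * m * b \<noteq> 0"
    proof (rule ccontr)
      assume "\<not> ?thesis"
      then have "(KP + of_real 3 * m * b) - (KP + of_real 2 * m * b) = 0" by simp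
      then have "m * b = 0" by (simp add: algebra_simps)
      then show False using mb by simp
    qed
    then show ?thesis using that[of 1 2] that[of 1 3] False by auto
  qed
  note e1 = step[OF ls(2,3,6)] and e2 = step[OF ls(4,5,7)]
  have "(L - c) * (of_real (l1 - l2) * (m * b)) =
     (L * (KP + of_real l1 * m * b) - (KR + of_real l1 * m * (c * b)))
     - (L * (KP + of_real l2 * m * b) - (KR + of_real l2 * m * (c * b)))"
    by (simp add: of_real_diff algebra_simps)
  also have "\<dots> = 0" using e1 e2 by simp
  finally have "(L - c) * (of_real (l1 - l2) * (m * b)) = 0" .
  moreover have "of_real (l1 - l2) \<noteq> (0::complex)" using ls(1) by simp
  ultimately show ?thesis using mb by simp
qed

theorem lemma3p4:
  fixes n :: nat and P :: "complex poly poly" and \<alpha> \<gamma> :: complex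
  assumes "n \<ge> 1"
    and "bideg_le n P"
    and "\<forall>z \<in> bidisk. ev2 P (fst z) (snd z) \<noteq> 0"
    and "bideg_eq n (refl_poly n P)"
    and "\<not> (\<exists>q. q dvd P \<and> q dvd refl_poly n P \<and> \<not> is_unit q)"
    and "\<forall>\<zeta> \<in> torus2. \<exists>L. nt_tendsto (rif n P) \<zeta> L"
    and "cmod \<alpha> = 1" and "cmod \<gamma> = 1"
  shows "{\<gamma>} \<times> {z. cmod z = 1} \<subseteq> clevel n P \<alpha> \<longleftrightarrow>
    (\<exists>\<mu>. (\<gamma>, \<mu>) \<in> torus2 \<and> ev2 P \<gamma> \<mu> = 0 \<and> nt_limit (rif n P) (\<gamma>, \<mu>) = \<alpha>)"
proof -
  define R where "R = refl_poly n P"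
  have dP: "degree P \<le> 1" and dc: "\<And>i. degree (coeff P i) \<le> n"
    using assms(2) unfolding bideg_le_def by auto
  have dR: "degree R \<le> 1" using assms(4) unfolding bideg_eq_def R_def by auto
  define a where "a = poly (coeff P 0) \<gamma>"
  define b where "b = poly (coeff P 1) \<gamma>"
  have g1: "cmod \<gamma> = 1" by (fact assms(8))
  have g0: "\<gamma> \<noteq> 0" using g1 by auto
  have evP: "ev2 P \<gamma> z = a + b * z" for z using ev2_lin[OF dP] a_def b_def by simp
  have R0: "poly (coeff R 0) \<gamma> = \<gamma> ^ n * cnj b"
    unfolding R_def refl_coeff0 b_def by (rule refl_eval[OF dc g1])
  have R1: "poly (coeff R 1) \<gamma> = \<gamma> ^ n * cnj a"
    unfolding R_def refl_coeff1 a_def by (rule refl_eval[OF dc g1])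
  have evR: "ev2 R \<gamma> z = \<gamma> ^ n * cnj b + \<gamma> ^ n * cnj a * z" for z
    using ev2_lin[OF dR] R0 R1 by simp
  have nab: "\<not> (a = 0 \<and> b = 0)"
  proof
    assume ab: "a = 0 \<and> b = 0"
    have "[:[:-\<gamma>,1:]:] dvd P" using dvd_lin[OF dP] ab a_def b_def by simp
    moreover have "[:[:-\<gamma>,1:]:] dvd R" using dvd_lin[OF dR] ab R0 R1 by simp
    ultimately show False using assms(5) not_unit_lin[of \<gamma>] unfolding R_def by blast
  qed
  have rifeq: "rif n P = (\<lambda>z. ev2 R (fst z) (snd z) / ev2 P (fst z) (snd z))"
    by (rule ext) (simp add: rif_def R_def)
  have keyapp: "nt_limit (rif n P) (\<gamma>, \<mu>) = c"
    if m1: "cmod \<mu> = 1" and b0: "b \<noteq> 0" and rt: "a + b * \<mu> = 0"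
      and hc: "\<forall>z. ev2 R \<gamma> z = c * ev2 P \<gamma> z" for \<mu> c
  proof -
    have uniq: "L = c" if "nt_tendsto (rif n P) (\<gamma>, \<mu>) L" for L
    proof -
      have "((\<lambda>z. ev2 R (fst z) (snd z) / ev2 P (fst z) (snd z)) \<longlongrightarrow> L) (at (\<gamma>,\<mu>) within nt_region 5 (\<gamma>,\<mu>))"
        using that unfolding nt_tendsto_def rifeq by simp
      then show ?thesis
        using key[OF dP dR g1 m1 _ _ hc] b0 rt a_def b_def by simp
    qed
    have "(\<gamma>, \<mu>) \<in> torus2" using g1 m1 by (simp add: torus2_def)
    then obtain L where L: "nt_tendsto (rif n P) (\<gamma>, \<mu>) L" using assms(6) by blast
    have "nt_tendsto (rif n P) (\<gamma>, \<mu>) c" using L uniq[OF L] by simp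
    then show ?thesis unfolding nt_limit_def using uniq by (rule the_equality)
  qed
  show ?thesis
  proof
    assume incl: "{\<gamma>} \<times> {z. cmod z = 1} \<subseteq> clevel n P \<alpha>"
    have lev: "ev2 R \<gamma> z = \<alpha> * ev2 P \<gamma> z" if "cmod z = 1" for z
      using incl that unfolding clevel_def R_def by auto
    have e1: "\<gamma> ^ n * cnj b + \<gamma> ^ n * cnj a = \<alpha> * (a + b)"
      using lev[of 1] evR[of 1] evP[of 1] by simp
    have e2: "\<gamma> ^ n * cnj b - \<gamma> ^ n * cnj a = \<alpha> * (a - b)"
      using lev[of "-1"] evR[of "-1"] evP[of "-1"] by simp
    have f1: "\<gamma> ^ n * cnj b = \<alpha> * a"
    proof -
      have "\<gamma> ^ n * cnj b = ((\<gamma> ^ n * cnj b + \<gamma> ^ n * cnj a) + (\<gamma> ^ n * cnj b - \<gamma> ^ n * cnj a)) / 2"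
        by (simp add: field_simps)
      also have "\<dots> = (\<alpha> * (a + b) + \<alpha> * (a - b)) / 2" by (simp only: e1 e2)
      also have "\<dots> = \<alpha> * a" by (simp add: algebra_simps)
      finally show ?thesis .
    qed
    have f2: "\<gamma> ^ n * cnj a = \<alpha> * b"
    proof -
      have "\<gamma> ^ n * cnj a = ((\<gamma> ^ n * cnj b + \<gamma> ^ n * cnj a) - (\<gamma> ^ n * cnj b - \<gamma> ^ n * cnj a)) / 2"
        by (simp add: field_simps)
      also have "\<dots> = (\<alpha> * (a + b) - \<alpha> * (a - b)) / 2" by (simp only: e1 e2)
      also have "\<dots> = \<alpha> * b" by (simp add: algebra_simps)
      finally show ?thesis .
    qed
    have hc: "\<forall>z. ev2 R \<gamma> z = \<alpha> * ev2 P \<gamma> z"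
      using evR evP f1 f2 by (simp add: algebra_simps)
    have b0: "b \<noteq> 0"
    proof
      assume "b = 0"
      then have "\<gamma> ^ n * cnj a = 0" using f2 by simp
      then have "a = 0" using g0 by simp
      then show False using nab \<open>b = 0\<close> by simp
    qed
    have nab2: "cmod a = cmod b"
    proof -
      have "cmod (\<gamma> ^ n * cnj a) = cmod (\<alpha> * b)" using f2 by simp
      then show ?thesis using g1 assms(7) by (simp add: norm_mult norm_power)
    qed
    define \<mu> where "\<mu> = - a / b"
    have m1: "cmod \<mu> = 1" using nab2 b0 by (simp add: \<mu>_def norm_divide)
    have rt: "a + b * \<mu> = 0" using b0 by (simp add: \<mu>_def)
    show "\<exists>\<mu>. (\<gamma>, \<mu>) \<in> torus2 \<and> ev2 P \<gamma> \<mu> = 0 \<and> nt_limit (rif n P) (\<gamma>, \<mu>) = \<alpha>"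
      using keyapp[OF m1 b0 rt hc] m1 g1 rt evP by (auto simp: torus2_def)
  next
    assume "\<exists>\<mu>. (\<gamma>, \<mu>) \<in> torus2 \<and> ev2 P \<gamma> \<mu> = 0 \<and> nt_limit (rif n P) (\<gamma>, \<mu>) = \<alpha>"
    then obtain \<mu> where mt: "(\<gamma>, \<mu>) \<in> torus2" and z: "ev2 P \<gamma> \<mu> = 0"
      and nl: "nt_limit (rif n P) (\<gamma>, \<mu>) = \<alpha>" by blast
    have m1: "cmod \<mu> = 1" using mt by (simp add: torus2_def)
    have rt: "a + b * \<mu> = 0" using z evP by simp
    have b0: "b \<noteq> 0" using rt nab by auto
    have aeq: "a = - (b * \<mu>)" using rt by (simp add: eq_neg_iff_add_eq_0)
    have hm: "cnj \<mu> * \<mu> = 1"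
    proof -
      have "\<mu> * cnj \<mu> = 1" using m1 by (simp add: complex_norm_square[symmetric])
      then show ?thesis by (simp add: mult.commute)
    qed
    define c where "c = \<gamma> ^ n * cnj a / b"
    have cb: "c * b = \<gamma> ^ n * cnj a" using b0 by (simp add: c_def)
    have ca: "cnj a = - (cnj b * cnj \<mu>)" using aeq by simp
    have hc: "\<forall>z. ev2 R \<gamma> z = c * ev2 P \<gamma> z"
    proof
      fix z
      have "ev2 P \<gamma> z = b * (z - \<mu>)" using evP[of z] aeq by (simp add: algebra_simps)
      then have "c * ev2 P \<gamma> z = (c * b) * (z - \<mu>)" by (simp only: mult.assoc)
      also have "\<dots> = \<gamma> ^ n * cnj a * (z - \<mu>)" by (simp only: cb)
      also have "\<dots> = \<gamma> ^ n * cnj a * z + \<gamma> ^ n * cnj b * (cnj \<mu> * \<mu>)"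
        by (simp only: ca) (simp add: algebra_simps)
      also have "\<dots> = ev2 R \<gamma> z" using hm evR by simp
      finally show "ev2 R \<gamma> z = c * ev2 P \<gamma> z" by simp
    qed
    have ac: "\<alpha> = c" using keyapp[OF m1 b0 rt hc] nl by simp
    show "{\<gamma>} \<times> {z. cmod z = 1} \<subseteq> clevel n P \<alpha>"
    proof
      fix x assume x: "x \<in> {\<gamma>} \<times> {z. cmod z = 1}"
      then have x1: "fst x = \<gamma>" and x2: "cmod (snd x) = 1" by auto
      have "ev2 R (fst x) (snd x) = \<alpha> * ev2 P (fst x) (snd x)"
        unfolding x1 ac using hc by blast
      moreover have "x \<in> torus2" using x1 x2 g1 by (simp add: torus2_def)
      ultimately show "x \<in> clevel n P \<alpha>" unfolding clevel_def R_def by simp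
    qed
  qed
qed

end
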